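(* Let $(X,\mathcal{B},\mu)$ be a standard probability space and $r\geq2$ an integer. A subset $K$ of $\mathfrak{P}_r$ is precompact in $(\mathfrak{P}_r,\rho)$ if and only if $h^*_\mu(K)=0$.
   Context: $\mathfrak{P}_r$ is the set of finite measurable partitions of $X$ with at most $r$ atoms (finite collections of pairwise disjoint measurable sets covering $X$ mod $\mu$, identified mod $0$). $H_\mu(\alpha)=-\sum_{A\in\alpha}\mu(A)\log\mu(A)$; $H_\mu(\alpha|\beta)=\sum_{B\in\beta}\mu(B)\sum_{A\in\alpha}-\mu(A|B)\log\mu(A|B)$ with $\mu(A|B)=\mu(A\cap B)/\mu(B)$ ($0$ if $\mu(B)=0$), $0\log0=0$. Rokhlin metric: $\rho(\alpha,\beta)=H_\mu(\alpha|\beta)+H_\mu(\beta|\alpha)$. Maximal pattern entropy: $h^*_\mu(K)=\limsup_{n}\frac1n\sup_{\alpha_1,\dots,\alpha_n\in K}H_\mu(\bigvee_{i=1}^n\alpha_i)$, where $\alpha\vee\beta=\{A\cap B\}$. *)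

theory Defs
  imports "HOL-Probability.Probability"
begin

text \<open>Every partition mod 0 has such a representative, and all
  quantities below (entropy, Rokhlin distance, pattern entropy) are invariant under
  modification by null sets, so this is a faithful set of representatives.\<close>

definition partitions_le :: "'a measure \<Rightarrow> nat \<Rightarrow> 'a set set set" where
  "partitions_le M r = {\<alpha>. finite \<alpha> \<and> card \<alpha> \<le> r \<and> \<alpha> \<subseteq> sets M \<and>
      disjoint \<alpha> \<and> \<Union>\<alpha> = space M}"

definition eta :: "real \<Rightarrow> real" where
  "eta x = (if x = 0 then 0 else - x * ln x)"

definition part_entropy :: "'a measure \<Rightarrow> 'a set set \<Rightarrow> real" where
  "part_entropy M \<alpha> = (\<Sum>A\<in>\<alpha>. eta (measure M A))"

text \<open>Conditional entropy; note that real division by 0 yields 0, matching the convention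
  mu(A|B) = 0 if mu(B) = 0.\<close>
definition cond_entropy :: "'a measure \<Rightarrow> 'a set set \<Rightarrow> 'a set set \<Rightarrow> real" where
  "cond_entropy M \<alpha> \<beta> =
     (\<Sum>B\<in>\<beta>. measure M B * (\<Sum>A\<in>\<alpha>. eta (measure M (A \<inter> B) / measure M B)))"

definition rokhlin_dist :: "'a measure \<Rightarrow> 'a set set \<Rightarrow> 'a set set \<Rightarrow> real" where
  "rokhlin_dist M \<alpha> \<beta> = cond_entropy M \<alpha> \<beta> + cond_entropy M \<beta> \<alpha>"

definition join_n :: "'a measure \<Rightarrow> (nat \<Rightarrow> 'a set set) \<Rightarrow> nat \<Rightarrow> 'a set set" where
  "join_n M as n = {space M \<inter> (\<Inter>i<n. f i) | f. \<forall>i<n. f i \<in> as i}"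

text \<open>sup over alpha_1..alpha_n in K of H(join); taken in ennreal (entropies are
  nonnegative), so that the supremum over an empty family is 0.\<close>
definition pattern_sup :: "'a measure \<Rightarrow> 'a set set set \<Rightarrow> nat \<Rightarrow> ennreal" where
  "pattern_sup M K n = (SUP as \<in> {as. \<forall>i<n. as i \<in> K}. ennreal (part_entropy M (join_n M as n)))"

definition max_pattern_entropy :: "'a measure \<Rightarrow> 'a set set set \<Rightarrow> ennreal" where
  "max_pattern_entropy M K = limsup (\<lambda>n. pattern_sup M K n / of_nat n)"

text \<open>Precompactness (total boundedness) of K with respect to the Rokhlin (pseudo)metric;
  since the pseudometric is identified mod 0 this is precompactness in the quotient metric
  space.\<close>
definition rokhlin_precompact :: "'a measure \<Rightarrow> 'a set set set \<Rightarrow> bool" where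
  "rokhlin_precompact M K \<longleftrightarrow>
     (\<forall>\<epsilon>>0. \<exists>F. finite F \<and> F \<subseteq> K \<and> (\<forall>\<alpha>\<in>K. \<exists>\<beta>\<in>F. rokhlin_dist M \<alpha> \<beta> < \<epsilon>))"

end

theory Submission
  imports Defs
begin

definition ppart :: "'a measure \<Rightarrow> 'a set set \<Rightarrow> bool" where
  "ppart M P \<longleftrightarrow> finite P \<and> P \<subseteq> sets M \<and> disjoint P \<and> \<Union>P = space M"

definition meet :: "'a set set \<Rightarrow> 'a set set \<Rightarrow> 'a set set" where
  "meet P Q = {A \<inter> B | A B. A \<in> P \<and> B \<in> Q}"

definition atom :: "'a set set \<Rightarrow> 'a \<Rightarrow> 'a set" where
  "atom P x = (THE A. A \<in> P \<and> x \<in> A)"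

lemma eta_alt: "eta x = - (x * ln x)"
  by (simp add: eta_def)

lemma eta_nonneg: "0 \<le> x \<Longrightarrow> x \<le> 1 \<Longrightarrow> 0 \<le> eta x"
  unfolding eta_alt by (cases "x = 0") (auto simp: mult_nonneg_nonpos)

lemma eta_le_1m: assumes "0 \<le> x" "x \<le> 1" shows "eta x \<le> 1 - x"
proof (cases "x = 0")
  case True then show ?thesis by (simp add: eta_def)
next
  case False
  then have xp: "0 < x" using assms by simp
  have "ln (1/x) \<le> 1/x - 1" using xp by (intro ln_le_minus_one) simp
  then have "- ln x \<le> 1/x - 1" using xp by (simp add: ln_div)
  then have "x * (- ln x) \<le> x * (1/x - 1)" using xp by (intro mult_left_mono) auto
  moreover have "x * (1/x - 1) = 1 - x" using xp by (simp add: field_simps)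
  ultimately show ?thesis by (simp add: eta_alt)
qed

lemma eta_le_1: "0 \<le> x \<Longrightarrow> x \<le> 1 \<Longrightarrow> eta x \<le> 1"
  using eta_le_1m[of x] by simp

lemma ppartD:
  assumes "ppart M P"
  shows "finite P" "P \<subseteq> sets M" "\<Union>P = space M"
    "\<And>A B. A \<in> P \<Longrightarrow> B \<in> P \<Longrightarrow> A \<noteq> B \<Longrightarrow> A \<inter> B = {}"
  using assms unfolding ppart_def disjoint_def disjnt_def by auto

lemma ppart_sub_space: "ppart M P \<Longrightarrow> A \<in> P \<Longrightarrow> A \<subseteq> space M"
  using ppartD(3) by blast

lemma atom:
  assumes "ppart M P" "x \<in> space M"
  shows "atom P x \<in> P \<and> x \<in> atom P x"
proof -
  have "x \<in> \<Union>P" using ppartD(3)[OF assms(1)] assms(2) by simp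
  then obtain A where A: "A \<in> P" "x \<in> A" by (rule UnionE)
  have uniq: "B = A" if "B \<in> P" "x \<in> B" for B
  proof (rule ccontr)
    assume "B \<noteq> A"
    then have "B \<inter> A = {}" using ppartD(4)[OF assms(1) that(1) A(1)] by simp
    then show False using that(2) A(2) by blast
  qed
  have "atom P x = A" unfolding atom_def
  proof (rule the_equality)
    show "A \<in> P \<and> x \<in> A" using A by simp
    show "\<And>B. B \<in> P \<and> x \<in> B \<Longrightarrow> B = A" using uniq by simp
  qed
  then show ?thesis using A by simp
qed

lemma atom_eq:
  assumes "ppart M P" "x \<in> space M" "A \<in> P"
  shows "atom P x = A \<longleftrightarrow> x \<in> A"
proof
  assume "atom P x = A" then show "x \<in> A" using atom[OF assms(1,2)] by simp
next
  assume xA: "x \<in> A"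
  show "atom P x = A"
  proof (rule ccontr)
    assume ne: "atom P x \<noteq> A"
    have "atom P x \<inter> A = {}" using ppartD(4)[OF assms(1) conjunct1[OF atom[OF assms(1,2)]] assms(3) ne] .
    then show False using xA atom[OF assms(1,2)] by blast
  qed
qed

lemma meet_image: "meet P Q = (\<lambda>(A,B). A \<inter> B) ` (P \<times> Q)"
  unfolding meet_def by auto

lemma meet_comm: "meet P Q = meet Q P"
  unfolding meet_def by blast

lemma meet_assoc: "meet (meet P Q) R = meet P (meet Q R)"
proof
  show "meet (meet P Q) R \<subseteq> meet P (meet Q R)"
  proof
    fix S assume "S \<in> meet (meet P Q) R"
    then obtain T C where T: "T \<in> meet P Q" "C \<in> R" "S = T \<inter> C" unfolding meet_def by blast
    then obtain A B where AB: "A \<in> P" "B \<in> Q" "T = A \<inter> B" unfolding meet_def by blast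
    have "B \<inter> C \<in> meet Q R" using AB T unfolding meet_def by blast
    moreover have "S = A \<inter> (B \<inter> C)" using T AB by (simp add: Int_assoc)
    ultimately show "S \<in> meet P (meet Q R)" using AB(1) unfolding meet_def by blast
  qed
  show "meet P (meet Q R) \<subseteq> meet (meet P Q) R"
  proof
    fix S assume "S \<in> meet P (meet Q R)"
    then obtain A T where T: "A \<in> P" "T \<in> meet Q R" "S = A \<inter> T" unfolding meet_def by blast
    then obtain B C where BC: "B \<in> Q" "C \<in> R" "T = B \<inter> C" unfolding meet_def by blast
    have "A \<inter> B \<in> meet P Q" using BC T unfolding meet_def by blast
    moreover have "S = (A \<inter> B) \<inter> C" using T BC by (simp add: Int_assoc)
    ultimately show "S \<in> meet (meet P Q) R" using BC(2) unfolding meet_def by blast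
  qed
qed

lemma ppart_meet:
  assumes "ppart M P" "ppart M Q"
  shows "ppart M (meet P Q)"
proof -
  note p = ppartD[OF assms(1)] and q = ppartD[OF assms(2)]
  have "finite (meet P Q)" unfolding meet_image using p(1) q(1) by simp
  moreover have "meet P Q \<subseteq> sets M" unfolding meet_def using p(2) q(2) by auto
  moreover have "disjoint (meet P Q)"
    unfolding disjoint_def disjnt_def meet_def
  proof (clarsimp)
    fix A B A' B' assume "A \<in> P" "B \<in> Q" "A' \<in> P" "B' \<in> Q" "A \<inter> B \<noteq> A' \<inter> B'"
    then have "A \<noteq> A' \<or> B \<noteq> B'" by auto
    then show "A \<inter> B \<inter> (A' \<inter> B') = {}"
    proof
      assume "A \<noteq> A'"
      then have "A \<inter> A' = {}" using p(4) \<open>A \<in> P\<close> \<open>A' \<in> P\<close> by simp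
      then show ?thesis by blast
    next
      assume "B \<noteq> B'"
      then have "B \<inter> B' = {}" using q(4) \<open>B \<in> Q\<close> \<open>B' \<in> Q\<close> by simp
      then show ?thesis by blast
    qed
  qed
  moreover have "\<Union>(meet P Q) = space M"
  proof
    show "\<Union>(meet P Q) \<subseteq> space M" unfolding meet_def using p(3) by blast
    show "space M \<subseteq> \<Union>(meet P Q)"
    proof
      fix x assume x: "x \<in> space M"
      then obtain A B where "A \<in> P" "x \<in> A" "B \<in> Q" "x \<in> B" using p(3) q(3) by blast
      then show "x \<in> \<Union>(meet P Q)" unfolding meet_def by blast
    qed
  qed
  ultimately show ?thesis unfolding ppart_def by blast
qed

lemma pe_image:
  assumes "finite V" "\<And>v w. v \<in> V \<Longrightarrow> w \<in> V \<Longrightarrow> v \<noteq> w \<Longrightarrow> h v \<inter> h w = {}"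
  shows "part_entropy M (h ` V) = (\<Sum>v\<in>V. eta (measure M (h v)))"
  unfolding part_entropy_def
proof (subst sum.reindex_nontrivial[OF assms(1)])
  fix x y assume "x \<in> V" "y \<in> V" "x \<noteq> y" "h x = h y"
  then have "h x = {}" using assms(2)[of x y] by auto
  then show "eta (measure M (h x)) = 0" by (simp add: eta_def)
qed (simp add: comp_def)

lemma eta_split:
  fixes x :: "'b \<Rightarrow> real"
  assumes "finite P" "\<And>A. A \<in> P \<Longrightarrow> 0 \<le> x A" "(\<Sum>A\<in>P. x A) = m"
  shows "(\<Sum>A\<in>P. eta (x A)) = eta m + m * (\<Sum>A\<in>P. eta (x A / m))"
proof (cases "m = 0")
  case True
  then have "\<forall>A\<in>P. x A = 0" using assms sum_nonneg_eq_0_iff by blast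
  then show ?thesis using True by (simp add: eta_def)
next
  case False
  have m0: "0 \<le> m" using assms sum_nonneg by metis
  then have mp: "0 < m" using False by simp
  have *: "m * eta (x A / m) = eta (x A) + x A * ln m" if "A \<in> P" for A
  proof (cases "x A = 0")
    case True then show ?thesis by (simp add: eta_def)
  next
    case False
    then have "0 < x A" using assms(2)[OF that] by simp
    then show ?thesis using mp by (simp add: eta_alt ln_div field_simps)
  qed
  have "m * (\<Sum>A\<in>P. eta (x A / m)) = (\<Sum>A\<in>P. eta (x A) + x A * ln m)"
    by (simp add: sum_distrib_left *)
  also have "\<dots> = (\<Sum>A\<in>P. eta (x A)) + m * ln m"
    by (simp add: sum.distrib assms(3) flip: sum_distrib_right)
  finally show ?thesis by (simp add: eta_alt)
qed

context prob_space
begin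

lemma ppart_sum_measure:
  assumes "ppart M P" "B \<in> sets M"
  shows "(\<Sum>A\<in>P. measure M (A \<inter> B)) = measure M B"
proof -
  note p = ppartD[OF assms(1)]
  have "measure M (\<Union>A\<in>P. A \<inter> B) = (\<Sum>A\<in>P. measure M (A \<inter> B))"
  proof (rule finite_measure_finite_Union)
    show "disjoint_family_on (\<lambda>A. A \<inter> B) P" unfolding disjoint_family_on_def
    proof (intro ballI impI)
      fix A A' assume "A \<in> P" "A' \<in> P" "A \<noteq> A'"
      then have "A \<inter> A' = {}" using p(4) by simp
      then show "A \<inter> B \<inter> (A' \<inter> B) = {}" by blast
    qed
  qed (use p assms(2) in auto)
  moreover have "(\<Union>A\<in>P. A \<inter> B) = B" using p(3) sets.sets_into_space[OF assms(2)] by blast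
  ultimately show ?thesis by simp
qed

lemma pe_meet_sum:
  assumes "ppart M P" "ppart M Q"
  shows "part_entropy M (meet P Q) = (\<Sum>B\<in>Q. \<Sum>A\<in>P. eta (measure M (A \<inter> B)))"
proof -
  note p = ppartD[OF assms(1)] and q = ppartD[OF assms(2)]
  have "part_entropy M (meet P Q) = (\<Sum>v\<in>P \<times> Q. eta (measure M ((\<lambda>(A,B). A \<inter> B) v)))"
    unfolding meet_image
  proof (rule pe_image)
    show "finite (P \<times> Q)" using p(1) q(1) by simp
    fix v w assume "v \<in> P \<times> Q" "w \<in> P \<times> Q" "v \<noteq> w"
    then obtain A B A' B' where v: "v = (A, B)" "w = (A', B')" "A \<in> P" "B \<in> Q" "A' \<in> P" "B' \<in> Q"
      and "A \<noteq> A' \<or> B \<noteq> B'" by (cases v; cases w) auto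
    then have "A \<inter> A' = {} \<or> B \<inter> B' = {}" using p(4) q(4) by metis
    then show "(case v of (A, B) \<Rightarrow> A \<inter> B) \<inter> (case w of (A, B) \<Rightarrow> A \<inter> B) = {}"
      using v by auto
  qed
  also have "\<dots> = (\<Sum>(A,B)\<in>P \<times> Q. eta (measure M (A \<inter> B)))"
    by (intro sum.cong) (auto split: prod.splits)
  also have "\<dots> = (\<Sum>A\<in>P. \<Sum>B\<in>Q. eta (measure M (A \<inter> B)))"
    by (simp add: sum.cartesian_product)
  also have "\<dots> = (\<Sum>B\<in>Q. \<Sum>A\<in>P. eta (measure M (A \<inter> B)))"
    by (rule sum.swap)
  finally show ?thesis .
qed

lemma chain_rule:
  assumes "ppart M P" "ppart M Q"
  shows "part_entropy M (meet P Q) = part_entropy M Q + cond_entropy M P Q"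
proof -
  note p = ppartD[OF assms(1)] and q = ppartD[OF assms(2)]
  have "(\<Sum>A\<in>P. eta (measure M (A \<inter> B))) =
      eta (measure M B) + measure M B * (\<Sum>A\<in>P. eta (measure M (A \<inter> B) / measure M B))"
    if "B \<in> Q" for B
    using p(1) ppart_sum_measure[OF assms(1)] q(2) that by (intro eta_split) auto
  then have "part_entropy M (meet P Q) =
      (\<Sum>B\<in>Q. eta (measure M B) + measure M B * (\<Sum>A\<in>P. eta (measure M (A \<inter> B) / measure M B)))"
    unfolding pe_meet_sum[OF assms] by (intro sum.cong) auto
  then show ?thesis
    unfolding part_entropy_def cond_entropy_def by (simp add: sum.distrib)
qed

lemma cond_entropy_nonneg:
  assumes "ppart M Q"
  shows "0 \<le> cond_entropy M P Q"
  unfolding cond_entropy_def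
proof (intro sum_nonneg mult_nonneg_nonneg)
  fix B A assume "B \<in> Q" "A \<in> P"
  have "measure M (A \<inter> B) \<le> measure M B"
    using ppartD(2)[OF assms] \<open>B \<in> Q\<close> by (intro finite_measure_mono) auto
  then show "0 \<le> eta (measure M (A \<inter> B) / measure M B)"
  proof (cases "measure M B = 0")
    case False
    then have "0 < measure M B" using measure_nonneg[of M B] by linarith
    then show ?thesis using \<open>measure M (A \<inter> B) \<le> measure M B\<close>
      by (intro eta_nonneg) (auto simp: divide_le_eq_1)
  qed (simp add: eta_def)
qed simp

end


definition lev :: "'a measure \<Rightarrow> ('a \<Rightarrow> 'b) \<Rightarrow> 'b \<Rightarrow> real" where
  "lev M W v = measure M (W -` {v} \<inter> space M)"

definition Hs :: "'a measure \<Rightarrow> ('a \<Rightarrow> 'b) \<Rightarrow> real" where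
  "Hs M W = (\<Sum>v\<in>W ` space M. eta (lev M W v))"

context prob_space
begin

lemma Hs_entropy:
  assumes "simple_function M W"
  shows "entropy (exp 1) (count_space (W ` space M)) W = Hs M W"
proof -
  interpret information_space M "exp 1" by standard simp
  show ?thesis
    using entropy_simple_distributed[OF simple_distributedI[OF assms measure_nonneg refl]]
    by (simp add: Hs_def lev_def eta_alt log_def sum_negf)
qed

lemma regroup:
  assumes sf: "simple_function M W" and V: "\<And>x. x \<in> space M \<Longrightarrow> V x = \<pi> (W x)"
  shows "(\<Sum>t\<in>W ` space M. lev M W t * h (\<pi> t)) = (\<Sum>u\<in>V ` space M. lev M V u * h u)"
proof -
  have fin: "finite (W ` space M)" using simple_functionD(1)[OF sf] .
  have img: "V ` space M = \<pi> ` (W ` space M)" using V by force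
  have lev: "lev M V u = (\<Sum>t\<in>{t \<in> W ` space M. \<pi> t = u}. lev M W t)" for u
  proof -
    have "V -` {u} \<inter> space M = (\<Union>t\<in>{t \<in> W ` space M. \<pi> t = u}. W -` {t} \<inter> space M)"
      using V by auto
    moreover have "measure M (\<Union>t\<in>{t \<in> W ` space M. \<pi> t = u}. W -` {t} \<inter> space M) =
        (\<Sum>t\<in>{t \<in> W ` space M. \<pi> t = u}. measure M (W -` {t} \<inter> space M))"
    proof (rule finite_measure_finite_Union)
      show "finite {t \<in> W ` space M. \<pi> t = u}" using fin by simp
      show "(\<lambda>t. W -` {t} \<inter> space M) ` {t \<in> W ` space M. \<pi> t = u} \<subseteq> events"
        using simple_functionD(2)[OF sf] by auto
      show "disjoint_family_on (\<lambda>t. W -` {t} \<inter> space M) {t \<in> W ` space M. \<pi> t = u}"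
        unfolding disjoint_family_on_def by auto
    qed
    ultimately show ?thesis unfolding lev_def by simp
  qed
  have "(\<Sum>t\<in>W ` space M. lev M W t * h (\<pi> t)) =
      (\<Sum>u\<in>\<pi> ` (W ` space M). \<Sum>t\<in>{t \<in> W ` space M. \<pi> t = u}. lev M W t * h (\<pi> t))"
    by (rule sum.image_gen[OF fin])
  also have "\<dots> = (\<Sum>u\<in>\<pi> ` (W ` space M). \<Sum>t\<in>{t \<in> W ` space M. \<pi> t = u}. lev M W t * h u)"
    by (intro sum.cong refl) auto
  also have "\<dots> = (\<Sum>u\<in>V ` space M. lev M V u * h u)"
    unfolding img lev by (simp add: sum_distrib_right)
  finally show ?thesis .
qed

lemma lev_mono:
  assumes sf: "simple_function M W" and V: "\<And>x. x \<in> space M \<Longrightarrow> V x = \<pi> (W x)"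
  shows "lev M W t \<le> lev M V (\<pi> t)"
  unfolding lev_def
proof (rule finite_measure_mono)
  show "W -` {t} \<inter> space M \<subseteq> V -` {\<pi> t} \<inter> space M" using V by auto
  have "simple_function M V"
  proof -
    have "simple_function M (\<pi> \<circ> W)" using sf by (rule simple_function_compose)
    moreover have "simple_function M V = simple_function M (\<pi> \<circ> W)"
      by (rule simple_function_cong) (simp add: V)
    ultimately show ?thesis by simp
  qed
  then show "V -` {\<pi> t} \<inter> space M \<in> events" by (rule simple_functionD(2))
qed

lemma submod_Hs:
  assumes X: "simple_function M X" and Y: "simple_function M Y" and Z: "simple_function M Z"
  shows "Hs M (\<lambda>x. (X x, Y x, Z x)) + Hs M Z \<le> Hs M (\<lambda>x. (X x, Z x)) + Hs M (\<lambda>x. (Y x, Z x))"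
proof -
  interpret information_space M "exp 1" by standard simp
  define T where "T = (\<lambda>x. (X x, Y x, Z x))"
  define XZ where "XZ = (\<lambda>x. (X x, Z x))"
  define YZ where "YZ = (\<lambda>x. (Y x, Z x))"
  have sT: "simple_function M T" unfolding T_def using X Y Z by (intro simple_function_Pair)
  have sXZ: "simple_function M XZ" unfolding XZ_def using X Z by (intro simple_function_Pair)
  have sYZ: "simple_function M YZ" unfolding YZ_def using Y Z by (intro simple_function_Pair)
  have dZ: "simple_distributed M Z (lev M Z)"
    using simple_distributedI[OF Z measure_nonneg refl] unfolding lev_def .
  have dT: "simple_distributed M T (lev M T)"
    using simple_distributedI[OF sT measure_nonneg refl] unfolding lev_def .
  have dXZ: "simple_distributed M XZ (lev M XZ)"
    using simple_distributedI[OF sXZ measure_nonneg refl] unfolding lev_def .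
  have dYZ: "simple_distributed M YZ (lev M YZ)"
    using simple_distributedI[OF sYZ measure_nonneg refl] unfolding lev_def .
  have I: "conditional_mutual_information (exp 1) (count_space (X`space M)) (count_space (Y`space M)) (count_space (Z`space M)) X Y Z = (\<Sum>(x, y, z)\<in>T ` space M.
      lev M T (x, y, z) * log (exp 1) (lev M T (x, y, z) / (lev M XZ (x, z) * (lev M YZ (y, z) / lev M Z z))))"
    using conditional_mutual_information_eq[OF dZ dYZ[unfolded YZ_def] dXZ[unfolded XZ_def] dT[unfolded T_def]]
    unfolding T_def XZ_def YZ_def .
  have I0: "0 \<le> conditional_mutual_information (exp 1) (count_space (X`space M)) (count_space (Y`space M)) (count_space (Z`space M)) X Y Z" by (rule conditional_mutual_information_nonneg[OF X Y Z])
  define pxz where "pxz = (\<lambda>(x::'b, y::'c, z::'d). (x, z))"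
  define pyz where "pyz = (\<lambda>(x::'b, y::'c, z::'d). (y, z))"
  define pz where "pz = (\<lambda>(x::'b, y::'c, z::'d). z)"
  have V1: "\<And>x. x \<in> space M \<Longrightarrow> XZ x = pxz (T x)" by (simp add: XZ_def T_def pxz_def)
  have V2: "\<And>x. x \<in> space M \<Longrightarrow> YZ x = pyz (T x)" by (simp add: YZ_def T_def pyz_def)
  have V3: "\<And>x. x \<in> space M \<Longrightarrow> Z x = pz (T x)" by (simp add: T_def pz_def)
  have trm: "lev M T t * ln (lev M T t / (lev M XZ (pxz t) * (lev M YZ (pyz t) / lev M Z (pz t)))) =
      lev M T t * ln (lev M T t) - lev M T t * ln (lev M XZ (pxz t))
      - lev M T t * ln (lev M YZ (pyz t)) + lev M T t * ln (lev M Z (pz t))" for t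
  proof (cases "lev M T t = 0")
    case False
    then have p: "0 < lev M T t" using measure_nonneg unfolding lev_def
      by (metis less_eq_real_def)
    have "0 < lev M XZ (pxz t)" using p lev_mono[where W=T and V=XZ and \<pi>=pxz, OF sT V1, of t] by linarith
    moreover have "0 < lev M YZ (pyz t)" using p lev_mono[where W=T and V=YZ and \<pi>=pyz, OF sT V2, of t] by linarith
    moreover have "0 < lev M Z (pz t)" using p lev_mono[where W=T and V=Z and \<pi>=pz, OF sT V3, of t] by linarith
    ultimately show ?thesis using p by (simp add: ln_div ln_mult algebra_simps)
  qed simp
  have "conditional_mutual_information (exp 1) (count_space (X`space M)) (count_space (Y`space M)) (count_space (Z`space M)) X Y Z = (\<Sum>t\<in>T ` space M.
      lev M T t * ln (lev M T t / (lev M XZ (pxz t) * (lev M YZ (pyz t) / lev M Z (pz t)))))"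
    unfolding I by (intro sum.cong refl) (auto simp: log_def pxz_def pyz_def pz_def)
  also have "\<dots> = (\<Sum>t\<in>T ` space M. lev M T t * ln (lev M T t))
      - (\<Sum>t\<in>T ` space M. lev M T t * ln (lev M XZ (pxz t)))
      - (\<Sum>t\<in>T ` space M. lev M T t * ln (lev M YZ (pyz t)))
      + (\<Sum>t\<in>T ` space M. lev M T t * ln (lev M Z (pz t)))"
    unfolding trm by (simp add: sum.distrib sum_subtractf)
  also have "\<dots> = - Hs M T + Hs M XZ + Hs M YZ - Hs M Z"
  proof -
    have r1: "(\<Sum>t\<in>T ` space M. lev M T t * ln (lev M XZ (pxz t))) = (\<Sum>u\<in>XZ ` space M. lev M XZ u * ln (lev M XZ u))"
      using regroup[where W=T and V=XZ and \<pi>=pxz, OF sT V1, of "\<lambda>u. ln (lev M XZ u)"] by simp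
    have r2: "(\<Sum>t\<in>T ` space M. lev M T t * ln (lev M YZ (pyz t))) = (\<Sum>u\<in>YZ ` space M. lev M YZ u * ln (lev M YZ u))"
      using regroup[where W=T and V=YZ and \<pi>=pyz, OF sT V2, of "\<lambda>u. ln (lev M YZ u)"] by simp
    have r3: "(\<Sum>t\<in>T ` space M. lev M T t * ln (lev M Z (pz t))) = (\<Sum>u\<in>Z ` space M. lev M Z u * ln (lev M Z u))"
      using regroup[where W=T and V=Z and \<pi>=pz, OF sT V3, of "\<lambda>u. ln (lev M Z u)"] by simp
    show ?thesis unfolding r1 r2 r3 by (simp add: Hs_def eta_alt sum_negf)
  qed
  finally show ?thesis using I0 unfolding T_def XZ_def YZ_def by linarith
qed

end


lemma partitions_le_ppart: "P \<in> partitions_le M r \<Longrightarrow> ppart M P"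
  unfolding partitions_le_def ppart_def by auto

lemma pe_cong0:
  assumes "finite X" "finite Y" "X - {{}} = Y - {{}}"
  shows "part_entropy M X = part_entropy M Y"
proof -
  have "part_entropy M X = part_entropy M (X - {{}})"
    unfolding part_entropy_def using assms(1) by (intro sum.mono_neutral_right) (auto simp: eta_def)
  moreover have "part_entropy M Y = part_entropy M (Y - {{}})"
    unfolding part_entropy_def using assms(2) by (intro sum.mono_neutral_right) (auto simp: eta_def)
  ultimately show ?thesis using assms(3) by simp
qed

lemma meet_cong0:
  assumes "X - {{}} = Y - {{}}"
  shows "meet A X - {{}} = meet A Y - {{}}"
proof -
  have *: "meet A X - {{}} \<subseteq> meet A Y - {{}}" if "X - {{}} = Y - {{}}" for X Y
  proof
    fix S assume "S \<in> meet A X - {{}}"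
    then obtain a x where "a \<in> A" "x \<in> X" "S = a \<inter> x" "S \<noteq> {}" unfolding meet_def by blast
    then have "x \<in> Y" using that by blast
    then show "S \<in> meet A Y - {{}}" using \<open>a \<in> A\<close> \<open>S = a \<inter> x\<close> \<open>S \<noteq> {}\<close> unfolding meet_def by blast
  qed
  show ?thesis using *[OF assms] *[OF assms[symmetric]] by blast
qed

definition refines :: "'a set set \<Rightarrow> 'a set set \<Rightarrow> bool" where
  "refines Z B \<longleftrightarrow> (\<forall>S\<in>Z. \<exists>C\<in>B. S \<subseteq> C)"

lemma refines_meet0:
  assumes "ppart M B" "refines Z B"
  shows "meet Z B - {{}} = Z - {{}}"
proof
  show "meet Z B - {{}} \<subseteq> Z - {{}}"
  proof
    fix T assume "T \<in> meet Z B - {{}}"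
    then obtain S C where SC: "S \<in> Z" "C \<in> B" "T = S \<inter> C" "T \<noteq> {}" unfolding meet_def by blast
    obtain C0 where C0: "C0 \<in> B" "S \<subseteq> C0" using assms(2) SC(1) unfolding refines_def by blast
    have "C = C0" using ppartD(4)[OF assms(1) SC(2) C0(1)] SC C0 by blast
    then have "T = S" using SC(3) C0(2) by (simp add: Int_absorb2)
    then show "T \<in> Z - {{}}" using SC(1,4) by simp
  qed
  show "Z - {{}} \<subseteq> meet Z B - {{}}"
  proof
    fix S assume "S \<in> Z - {{}}"
    obtain C0 where C0: "C0 \<in> B" "S \<subseteq> C0" using assms(2) \<open>S \<in> Z - {{}}\<close> unfolding refines_def by blast
    then have "S = S \<inter> C0" by blast
    then show "S \<in> meet Z B - {{}}" using C0 \<open>S \<in> Z - {{}}\<close> unfolding meet_def by blast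
  qed
qed

lemma finite_meet: "finite P \<Longrightarrow> finite Q \<Longrightarrow> finite (meet P Q)"
  unfolding meet_image by simp

lemma card_meet: "finite P \<Longrightarrow> finite Q \<Longrightarrow> card (meet P Q) \<le> card P * card Q"
  unfolding meet_image by (metis card_cartesian_product card_image_le finite_cartesian_product)

context prob_space
begin

lemma Hs_superset:
  assumes "finite V" "W ` space M \<subseteq> V"
  shows "Hs M W = (\<Sum>v\<in>V. eta (lev M W v))"
  unfolding Hs_def
proof (rule sum.mono_neutral_left[OF assms(1,2)])
  show "\<forall>i\<in>V - W ` space M. eta (lev M W i) = 0"
  proof
    fix i assume "i \<in> V - W ` space M"
    then have "W -` {i} \<inter> space M = {}" by auto
    then show "eta (lev M W i) = 0" by (simp add: lev_def eta_def)
  qed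
qed

lemma pe_Hs:
  assumes "finite V" "W ` space M \<subseteq> V" "\<And>v. v \<in> V \<Longrightarrow> W -` {v} \<inter> space M = h v"
  shows "part_entropy M (h ` V) = Hs M W"
proof -
  have "part_entropy M (h ` V) = (\<Sum>v\<in>V. eta (measure M (h v)))"
  proof (rule pe_image[OF assms(1)])
    fix v w assume "v \<in> V" "w \<in> V" "v \<noteq> w"
    then show "h v \<inter> h w = {}" using assms(3)[of v] assms(3)[of w] by auto
  qed
  also have "\<dots> = (\<Sum>v\<in>V. eta (lev M W v))"
    using assms(3) by (simp add: lev_def)
  also have "\<dots> = Hs M W" using Hs_superset[OF assms(1,2)] by simp
  finally show ?thesis .
qed

lemma sf_levels:
  assumes "finite V" "W ` space M \<subseteq> V" "\<And>v. v \<in> V \<Longrightarrow> W -` {v} \<inter> space M \<in> sets M"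
  shows "simple_function M W"
  unfolding simple_function_def using assms finite_subset by blast

lemma atom_level:
  assumes "ppart M P" "A \<in> P"
  shows "atom P -` {A} \<inter> space M = A"
  using atom_eq[OF assms(1) _ assms(2)] ppart_sub_space[OF assms] by auto

lemma atom_img: "ppart M P \<Longrightarrow> atom P ` space M \<subseteq> P"
proof
  fix A assume P: "ppart M P" and "A \<in> atom P ` space M"
  then obtain x where "x \<in> space M" "A = atom P x" by blast
  then show "A \<in> P" using atom[OF P] by simp
qed

lemma sf_atom:
  assumes "ppart M P" shows "simple_function M (atom P)"
  using ppartD(1,2)[OF assms] atom_img[OF assms] atom_level[OF assms]
  by (intro sf_levels[of P]) auto

lemma pe_atom:
  assumes "ppart M P" shows "part_entropy M P = Hs M (atom P)"
  using pe_Hs[of P "atom P" id] ppartD(1)[OF assms] atom_img[OF assms] atom_level[OF assms] by simp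

lemma pe_meet2:
  assumes "ppart M P" "ppart M R"
  shows "part_entropy M (meet P R) = Hs M (\<lambda>x. (atom P x, atom R x))"
  unfolding meet_image
proof (rule pe_Hs)
  show "finite (P \<times> R)" using ppartD(1)[OF assms(1)] ppartD(1)[OF assms(2)] by simp
  show "(\<lambda>x. (atom P x, atom R x)) ` space M \<subseteq> P \<times> R"
    using atom_img[OF assms(1)] atom_img[OF assms(2)] by auto
  fix v assume "v \<in> P \<times> R"
  then obtain A C where v: "v = (A, C)" "A \<in> P" "C \<in> R" by auto
  show "(\<lambda>x. (atom P x, atom R x)) -` {v} \<inter> space M = (case v of (A, B) \<Rightarrow> A \<inter> B)"
    using v atom_level[OF assms(1) v(2)] atom_level[OF assms(2) v(3)] by auto
qed

lemma meet3_image: "meet P (meet Q R) = (\<lambda>(A, B, C). A \<inter> (B \<inter> C)) ` (P \<times> Q \<times> R)"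
proof
  show "meet P (meet Q R) \<subseteq> (\<lambda>(A, B, C). A \<inter> (B \<inter> C)) ` (P \<times> Q \<times> R)"
  proof
    fix S assume "S \<in> meet P (meet Q R)"
    then obtain A T where T: "A \<in> P" "T \<in> meet Q R" "S = A \<inter> T" unfolding meet_def by blast
    then obtain B C where BC: "B \<in> Q" "C \<in> R" "T = B \<inter> C" unfolding meet_def by blast
    have "S = (\<lambda>(A, B, C). A \<inter> (B \<inter> C)) (A, B, C)" using T BC by simp
    moreover have "(A, B, C) \<in> P \<times> Q \<times> R" using T BC by simp
    ultimately show "S \<in> (\<lambda>(A, B, C). A \<inter> (B \<inter> C)) ` (P \<times> Q \<times> R)" by (rule image_eqI)
  qed
  show "(\<lambda>(A, B, C). A \<inter> (B \<inter> C)) ` (P \<times> Q \<times> R) \<subseteq> meet P (meet Q R)"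
  proof
    fix S assume "S \<in> (\<lambda>(A, B, C). A \<inter> (B \<inter> C)) ` (P \<times> Q \<times> R)"
    then obtain A B C where ABC: "A \<in> P" "B \<in> Q" "C \<in> R" "S = A \<inter> (B \<inter> C)" by auto
    have "B \<inter> C \<in> meet Q R" using ABC unfolding meet_def by blast
    then show "S \<in> meet P (meet Q R)" using ABC unfolding meet_def by blast
  qed
qed

lemma pe_meet3:
  assumes "ppart M P" "ppart M Q" "ppart M R"
  shows "part_entropy M (meet P (meet Q R)) = Hs M (\<lambda>x. (atom P x, atom Q x, atom R x))"
  unfolding meet3_image
proof (rule pe_Hs)
  show "finite (P \<times> Q \<times> R)" using ppartD(1)[OF assms(1)] ppartD(1)[OF assms(2)] ppartD(1)[OF assms(3)] by simp
  show "(\<lambda>x. (atom P x, atom Q x, atom R x)) ` space M \<subseteq> P \<times> Q \<times> R"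
    using atom_img[OF assms(1)] atom_img[OF assms(2)] atom_img[OF assms(3)] by auto
  fix v assume "v \<in> P \<times> Q \<times> R"
  then obtain A B C where v: "v = (A, B, C)" "A \<in> P" "B \<in> Q" "C \<in> R" by auto
  show "(\<lambda>x. (atom P x, atom Q x, atom R x)) -` {v} \<inter> space M = (case v of (A, B, C) \<Rightarrow> A \<inter> (B \<inter> C))"
    using v atom_level[OF assms(1) v(2)] atom_level[OF assms(2) v(3)] atom_level[OF assms(3) v(4)] by auto
qed

lemma submod_part:
  assumes "ppart M P" "ppart M Q" "ppart M R"
  shows "part_entropy M (meet P (meet Q R)) + part_entropy M R \<le> part_entropy M (meet P R) + part_entropy M (meet Q R)"
  unfolding pe_meet3[OF assms] pe_meet2[OF assms(1,3)] pe_meet2[OF assms(2,3)] pe_atom[OF assms(3)]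
  using submod_Hs[OF sf_atom[OF assms(1)] sf_atom[OF assms(2)] sf_atom[OF assms(3)]] .

lemma pe_le_card: "part_entropy M P \<le> card P"
proof -
  have "part_entropy M P \<le> of_nat (card P) * 1"
    unfolding part_entropy_def
    by (rule sum_bounded_above) (intro eta_le_1 measure_nonneg prob_le_1)
  then show ?thesis by simp
qed

lemma step_bound:
  assumes A: "ppart M A" and B: "ppart M B" and Z: "ppart M Z" and r: "refines Z B"
  shows "part_entropy M (meet A Z) \<le> part_entropy M Z + cond_entropy M A B"
proof -
  have s: "part_entropy M (meet A (meet Z B)) + part_entropy M B \<le> part_entropy M (meet A B) + part_entropy M (meet Z B)"
    by (rule submod_part[OF A Z B])
  have e0: "meet Z B - {{}} = Z - {{}}" by (rule refines_meet0[OF B r])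
  have fZ: "finite Z" "finite B" "finite A" using ppartD(1)[OF A] ppartD(1)[OF B] ppartD(1)[OF Z] by auto
  have e1: "part_entropy M (meet Z B) = part_entropy M Z"
    using e0 fZ by (intro pe_cong0 finite_meet) auto
  have e2: "part_entropy M (meet A (meet Z B)) = part_entropy M (meet A Z)"
    using meet_cong0[OF e0, of A] fZ by (intro pe_cong0 finite_meet) auto
  have e3: "part_entropy M (meet A B) = part_entropy M B + cond_entropy M A B"
    by (rule chain_rule[OF A B])
  show ?thesis using s e1 e2 e3 by linarith
qed

end

lemma join_n_0: "join_n M as 0 = {space M}"
  unfolding join_n_def by simp

lemma join_n_Suc: "join_n M as (Suc n) = meet (join_n M as n) (as n)"
proof
  show "join_n M as (Suc n) \<subseteq> meet (join_n M as n) (as n)"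
  proof
    fix S assume "S \<in> join_n M as (Suc n)"
    then obtain f where f: "S = space M \<inter> (\<Inter>i<Suc n. f i)" "\<forall>i<Suc n. f i \<in> as i"
      unfolding join_n_def by blast
    have "S = (space M \<inter> (\<Inter>i<n. f i)) \<inter> f n" using f(1) by (auto simp: lessThan_Suc)
    moreover have "space M \<inter> (\<Inter>i<n. f i) \<in> join_n M as n" using f(2) unfolding join_n_def by auto
    ultimately show "S \<in> meet (join_n M as n) (as n)" using f(2) unfolding meet_def by blast
  qed
  show "meet (join_n M as n) (as n) \<subseteq> join_n M as (Suc n)"
  proof
    fix S assume "S \<in> meet (join_n M as n) (as n)"
    then obtain f A where f: "S = (space M \<inter> (\<Inter>i<n. f i)) \<inter> A" "\<forall>i<n. f i \<in> as i" "A \<in> as n"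
      unfolding meet_def join_n_def by blast
    define g where "g = f(n := A)"
    have "S = space M \<inter> (\<Inter>i<Suc n. g i)" using f(1) by (auto simp: lessThan_Suc g_def)
    moreover have "\<forall>i<Suc n. g i \<in> as i" using f(2,3) by (auto simp: g_def less_Suc_eq)
    ultimately show "S \<in> join_n M as (Suc n)" unfolding join_n_def by blast
  qed
qed

lemma ppart_space: "ppart M {space M}"
  unfolding ppart_def by auto

lemma ppart_join:
  assumes "\<And>i. i < n \<Longrightarrow> ppart M (as i)"
  shows "ppart M (join_n M as n)"
  using assms
proof (induction n)
  case 0 then show ?case by (simp add: join_n_0 ppart_space)
next
  case (Suc n) then show ?case by (simp add: join_n_Suc ppart_meet)
qed

lemma card_join:
  assumes "\<And>i. i < n \<Longrightarrow> ppart M (as i) \<and> card (as i) \<le> r"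
  shows "card (join_n M as n) \<le> r ^ n"
  using assms
proof (induction n)
  case 0 then show ?case by (simp add: join_n_0)
next
  case (Suc n)
  have p: "ppart M (join_n M as n)" "ppart M (as n)" using Suc.prems by (auto intro: ppart_join)
  have "card (join_n M as (Suc n)) \<le> card (join_n M as n) * card (as n)"
    unfolding join_n_Suc using ppartD(1)[OF p(1)] ppartD(1)[OF p(2)] by (intro card_meet)
  also have "\<dots> \<le> r ^ n * r" using Suc by (intro mult_mono) auto
  finally show ?case by (simp add: mult.commute)
qed

lemma join_refines:
  assumes "i < n" shows "refines (join_n M as n) (as i)"
  unfolding refines_def join_n_def using assms by blast

lemma join_n_cong: "(\<And>i. i < n \<Longrightarrow> as i = bs i) \<Longrightarrow> join_n M as n = join_n M bs n"
  unfolding join_n_def by (intro Collect_cong) (metis)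

context prob_space
begin

lemma fwd_bound:
  assumes Z: "ppart M Z"
    and ab: "\<And>i. i < n \<Longrightarrow> ppart M (as i) \<and> ppart M (bs i) \<and> refines Z (bs i)"
  shows "part_entropy M (join_n M as n) \<le> part_entropy M Z + (\<Sum>i<n. cond_entropy M (as i) (bs i))"
proof -
  have fZ: "finite Z" using ppartD(1)[OF Z] .
  have claim: "part_entropy M (meet (join_n M as m) Z) \<le> part_entropy M Z + (\<Sum>i<m. cond_entropy M (as i) (bs i))"
    if "m \<le> n" for m
    using that
  proof (induction m)
    case 0
    have "meet Z {space M} - {{}} = Z - {{}}"
      by (rule refines_meet0[OF ppart_space]) (use ppart_sub_space[OF Z] in \<open>auto simp: refines_def\<close>)
    then have "part_entropy M (meet Z {space M}) = part_entropy M Z"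
      using fZ by (intro pe_cong0 finite_meet) auto
    then show ?case by (simp add: join_n_0 meet_comm)
  next
    case (Suc m)
    have pm: "ppart M (join_n M as m)" using ab Suc.prems by (intro ppart_join) auto
    have abm: "ppart M (as m)" "ppart M (bs m)" "refines Z (bs m)" using ab Suc.prems by auto
    have "meet (join_n M as (Suc m)) Z = meet (join_n M as m) (meet (as m) Z)"
      by (simp add: join_n_Suc meet_assoc)
    moreover have "part_entropy M (meet (join_n M as m) (meet (as m) Z)) + part_entropy M Z
        \<le> part_entropy M (meet (join_n M as m) Z) + part_entropy M (meet (as m) Z)"
      by (rule submod_part[OF pm abm(1) Z])
    moreover have "part_entropy M (meet (as m) Z) \<le> part_entropy M Z + cond_entropy M (as m) (bs m)"
      by (rule step_bound[OF abm(1) abm(2) Z abm(3)])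
    moreover have "part_entropy M (meet (join_n M as m) Z) \<le> part_entropy M Z + (\<Sum>i<m. cond_entropy M (as i) (bs i))"
      using Suc by simp
    ultimately show ?case by simp
  qed
  have pn: "ppart M (join_n M as n)" using ab by (intro ppart_join) auto
  have "part_entropy M (meet Z (join_n M as n)) = part_entropy M (join_n M as n) + cond_entropy M Z (join_n M as n)"
    by (rule chain_rule[OF Z pn])
  moreover have "0 \<le> cond_entropy M Z (join_n M as n)" by (rule cond_entropy_nonneg[OF pn])
  ultimately show ?thesis using claim[of n] by (simp add: meet_comm)
qed

end


lemma eta_lin:
  assumes "0 \<le> y"
  shows "eta y \<le> L * y + exp (- L - 1)"
proof (cases "y = 0")
  case True then show ?thesis by (simp add: eta_def)
next
  case False
  then have yp: "0 < y" using assms by simp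
  define z where "z = y * exp (L + 1)"
  have zp: "0 < z" using yp by (simp add: z_def)
  have lnz: "ln z = ln y + L + 1" using yp by (simp add: z_def ln_mult)
  have "ln (1/z) \<le> 1/z - 1" using zp by (intro ln_le_minus_one) simp
  then have "1 - ln z \<le> 1/z" using zp by (simp add: ln_div)
  then have "y * (1 - ln z) \<le> y * (1/z)" using yp by (intro mult_left_mono) auto
  moreover have "y * (1/z) = exp (- L - 1)"
  proof -
    have "y * (1/z) = 1 / exp (L + 1)" using yp by (simp add: z_def)
    also have "\<dots> = exp (- (L + 1))" by (metis exp_minus inverse_eq_divide)
    also have "- (L + 1) = - L - 1" by simp
    finally show ?thesis .
  qed
  moreover have "eta y = L * y + y * (1 - ln z)" unfolding eta_alt lnz by (simp add: algebra_simps)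
  ultimately show ?thesis by simp
qed

context prob_space
begin

lemma cond_upper:
  assumes P: "ppart M P" and Q: "ppart M Q" and E: "E \<in> sets M"
    and cov: "\<And>G. G \<in> Q \<Longrightarrow> \<exists>A\<in>P. G - A \<subseteq> E" and L: "0 \<le> L"
  shows "cond_entropy M P Q \<le> (1 + L) * measure M E + card P * exp (- L - 1)"
proof -
  note p = ppartD[OF P] and q = ppartD[OF Q]
  define e where "e = exp (- L - 1)"
  have e0: "0 \<le> e" by (simp add: e_def)
  have per: "measure M G * (\<Sum>A\<in>P. eta (measure M (A \<inter> G) / measure M G))
      \<le> (1 + L) * measure M (G \<inter> E) + card P * e * measure M G" if G: "G \<in> Q" for G
  proof (cases "measure M G = 0")
    case True then show ?thesis using e0 L by (simp add: measure_nonneg)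
  next
    case False
    define m where "m = measure M G"
    have mp: "0 < m" using False measure_nonneg[of M G] unfolding m_def by linarith
    have Gs: "G \<in> sets M" using q(2) G by blast
    obtain A0 where A0: "A0 \<in> P" "G - A0 \<subseteq> E" using cov[OF G] by blast
    have A0s: "A0 \<in> sets M" using p(2) A0 by blast
    have a_le: "measure M (A \<inter> G) \<le> m" for A
      unfolding m_def using Gs by (intro finite_measure_mono) auto
    have sumP: "(\<Sum>A\<in>P. measure M (A \<inter> G)) = m" unfolding m_def by (rule ppart_sum_measure[OF P Gs])
    have sum_rest: "(\<Sum>A\<in>P - {A0}. measure M (A \<inter> G)) = m - measure M (A0 \<inter> G)"
      using sumP sum.remove[OF p(1) A0(1), of "\<lambda>A. measure M (A \<inter> G)"] by simp
    have diff: "m - measure M (A0 \<inter> G) \<le> measure M (G \<inter> E)"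
    proof -
      have "measure M (G - A0) = m - measure M (G \<inter> A0)"
        unfolding m_def using Gs A0s by (rule finite_measure_Diff')
      moreover have "measure M (G - A0) \<le> measure M (G \<inter> E)"
        using A0(2) Gs E by (intro finite_measure_mono) auto
      ultimately show ?thesis by (simp add: Int_commute)
    qed
    have t0: "eta (measure M (A0 \<inter> G) / m) \<le> 1 - measure M (A0 \<inter> G) / m"
      using a_le[of A0] mp by (intro eta_le_1m) (auto simp: measure_nonneg divide_le_eq_1)
    have tr: "(\<Sum>A\<in>P - {A0}. eta (measure M (A \<inter> G) / m))
        \<le> (\<Sum>A\<in>P - {A0}. L * (measure M (A \<inter> G) / m) + e)"
      unfolding e_def using mp by (intro sum_mono eta_lin divide_nonneg_pos) (auto simp: measure_nonneg)
    also have "\<dots> = L / m * (m - measure M (A0 \<inter> G)) + card (P - {A0}) * e"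
      by (simp add: sum.distrib sum_divide_distrib[symmetric] sum_distrib_left[symmetric] sum_rest)
    also have "\<dots> \<le> L / m * (m - measure M (A0 \<inter> G)) + card P * e"
      using e0 card_Diff1_le[of P A0] by (intro add_left_mono mult_right_mono) auto
    finally have tr': "(\<Sum>A\<in>P - {A0}. eta (measure M (A \<inter> G) / m)) \<le> L / m * (m - measure M (A0 \<inter> G)) + card P * e" .
    have "(\<Sum>A\<in>P. eta (measure M (A \<inter> G) / m)) = eta (measure M (A0 \<inter> G) / m) + (\<Sum>A\<in>P - {A0}. eta (measure M (A \<inter> G) / m))"
      by (rule sum.remove[OF p(1) A0(1)])
    also have "\<dots> \<le> (1 - measure M (A0 \<inter> G) / m) + (L / m * (m - measure M (A0 \<inter> G)) + card P * e)"
      using t0 tr' by linarith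
    finally have "m * (\<Sum>A\<in>P. eta (measure M (A \<inter> G) / m)) \<le> m * ((1 - measure M (A0 \<inter> G) / m) + (L / m * (m - measure M (A0 \<inter> G)) + card P * e))"
      using mp by (intro mult_left_mono) auto
    also have "\<dots> = (1 + L) * (m - measure M (A0 \<inter> G)) + card P * e * m"
      using mp by (simp add: field_simps)
    also have "\<dots> \<le> (1 + L) * measure M (G \<inter> E) + card P * e * m"
      using diff L by (intro add_right_mono mult_left_mono) auto
    finally show ?thesis unfolding m_def .
  qed
  have "cond_entropy M P Q \<le> (\<Sum>G\<in>Q. (1 + L) * measure M (G \<inter> E) + card P * e * measure M G)"
    unfolding cond_entropy_def by (intro sum_mono per)
  also have "\<dots> = (1 + L) * (\<Sum>G\<in>Q. measure M (G \<inter> E)) + card P * e * (\<Sum>G\<in>Q. measure M (G \<inter> space M))"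
  proof -
    have "\<And>G. G \<in> Q \<Longrightarrow> G \<inter> space M = G" using q(3) by blast
    then show ?thesis by (simp add: sum.distrib sum_distrib_left)
  qed
  also have "\<dots> = (1 + L) * measure M E + card P * e"
    using ppart_sum_measure[OF Q E] ppart_sum_measure[OF Q sets.top] by (simp add: prob_space)
  finally show ?thesis unfolding e_def .
qed

lemma space_ne: "space M \<noteq> {}"
  using prob_space by auto

lemma argmax_atom:
  assumes P: "ppart M P" and B: "B \<in> sets M"
  obtains g where "g \<in> P" "\<And>A. A \<in> P \<Longrightarrow> measure M (A \<inter> B) \<le> measure M (g \<inter> B)"
proof -
  have "P \<noteq> {}" using ppartD(3)[OF P] space_ne by auto
  then have "Max ((\<lambda>A. measure M (A \<inter> B)) ` P) \<in> (\<lambda>A. measure M (A \<inter> B)) ` P"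
    using ppartD(1)[OF P] by (intro Max_in) auto
  then obtain g where g: "g \<in> P" "measure M (g \<inter> B) = Max ((\<lambda>A. measure M (A \<inter> B)) ` P)" by auto
  show ?thesis
  proof (rule that[OF g(1)])
    fix A assume "A \<in> P"
    then show "measure M (A \<inter> B) \<le> measure M (g \<inter> B)" unfolding g(2) using ppartD(1)[OF P] by (intro Max_ge) auto
  qed
qed

lemma miss_le:
  assumes P: "ppart M P" and B: "B \<in> sets M" and g: "g \<in> P"
    and gmax: "\<And>A. A \<in> P \<Longrightarrow> measure M (A \<inter> B) \<le> measure M (g \<inter> B)"
  shows "measure M (B - g) \<le> measure M B * (\<Sum>A\<in>P. eta (measure M (A \<inter> B) / measure M B))"
proof -
  note p = ppartD[OF P]
  have gs: "g \<in> sets M" using p(2) g by blast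
  have d: "measure M (B - g) = measure M B - measure M (B \<inter> g)" using B gs by (rule finite_measure_Diff')
  show ?thesis
  proof (cases "measure M B = 0")
    case True
    have "measure M (B - g) \<le> measure M B" using B by (intro finite_measure_mono) auto
    then show ?thesis using True by simp
  next
    case False
    define m where "m = measure M B"
    have mp: "0 < m" using False measure_nonneg[of M B] unfolding m_def by linarith
    define p where "p A = measure M (A \<inter> B) / m" for A
    have p0: "0 \<le> p A" for A by (simp add: p_def measure_nonneg mp less_imp_le)
    have ps: "(\<Sum>A\<in>P. p A) = 1"
      unfolding p_def using ppart_sum_measure[OF P B] mp by (simp add: sum_divide_distrib[symmetric] m_def)
    have pg: "p A \<le> p g" if "A \<in> P" for A using gmax[OF that] mp by (simp add: p_def divide_right_mono)
    have pgp: "0 < p g"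
    proof (rule ccontr)
      assume "\<not> 0 < p g"
      then have "\<forall>A\<in>P. p A = 0" using pg p0 by (meson order.trans not_less order.antisym)
      then show False using ps by simp
    qed
    have "(\<Sum>A\<in>P. p A * (- ln (p g))) \<le> (\<Sum>A\<in>P. eta (p A))"
    proof (intro sum_mono)
      fix A assume A: "A \<in> P"
      show "p A * - ln (p g) \<le> eta (p A)"
      proof (cases "p A = 0")
        case True then show ?thesis by (simp add: eta_def)
      next
        case False
        then have "0 < p A" using p0[of A] by simp
        then have "ln (p A) \<le> ln (p g)" using pg[OF A] by simp
        then show ?thesis using \<open>0 < p A\<close> by (simp add: eta_alt mult_left_mono)
      qed
    qed
    moreover have "(\<Sum>A\<in>P. p A * (- ln (p g))) = - ln (p g)"
      by (subst sum_distrib_right[symmetric]) (simp add: ps)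
    ultimately have "- ln (p g) \<le> (\<Sum>A\<in>P. eta (p A))" by simp
    moreover have "ln (p g) \<le> p g - 1" using pgp by (rule ln_le_minus_one)
    ultimately have "1 - p g \<le> (\<Sum>A\<in>P. eta (p A))" by linarith
    then have "m * (1 - p g) \<le> m * (\<Sum>A\<in>P. eta (p A))" using mp by (intro mult_left_mono) auto
    moreover have "m * (1 - p g) = measure M (B - g)" using mp by (simp add: p_def d m_def Int_commute field_simps)
    ultimately show ?thesis by (simp add: p_def m_def)
  qed
qed

end

lemma same_pattern:
  assumes Q: "ppart M Q" and bet: "ppart M \<beta>" and al: "\<alpha> \<noteq> {}"
    and g: "\<And>B. B \<in> Q \<Longrightarrow> g B \<in> \<alpha>" and g': "\<And>B. B \<in> Q \<Longrightarrow> g' B \<in> \<beta>"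
    and E: "\<And>B. B \<in> Q \<Longrightarrow> B - g B \<subseteq> E" and E': "\<And>B. B \<in> Q \<Longrightarrow> B - g' B \<subseteq> E'"
    and pat: "\<And>B B'. B \<in> Q \<Longrightarrow> B' \<in> Q \<Longrightarrow> g B = g B' \<longleftrightarrow> g' B = g' B'"
    and A': "A' \<in> \<beta>"
  shows "\<exists>A\<in>\<alpha>. A' - A \<subseteq> E \<union> E'"
proof (cases "\<exists>B0\<in>Q. g' B0 = A'")
  case True
  then obtain B0 where B0: "B0 \<in> Q" "g' B0 = A'" by blast
  have "A' - g B0 \<subseteq> E \<union> E'"
  proof
    fix x assume x: "x \<in> A' - g B0"
    have "x \<in> space M" using x A' ppart_sub_space[OF bet] by blast
    then obtain B where B: "B \<in> Q" "x \<in> B" using ppartD(3)[OF Q] by blast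
    show "x \<in> E \<union> E'"
    proof (rule ccontr)
      assume nx: "x \<notin> E \<union> E'"
      then have "x \<in> g' B" using E'[OF B(1)] B(2) by blast
      then have "g' B = A'" using ppartD(4)[OF bet g'[OF B(1)] A'] x by blast
      then have "g B = g B0" using pat[OF B(1) B0(1)] B0(2) by simp
      moreover have "x \<in> g B" using E[OF B(1)] B(2) nx by blast
      ultimately show False using x by simp
    qed
  qed
  then show ?thesis using g[OF B0(1)] by blast
next
  case False
  obtain A where A: "A \<in> \<alpha>" using al by blast
  have "A' - A \<subseteq> E \<union> E'"
  proof
    fix x assume x: "x \<in> A' - A"
    have "x \<in> space M" using x A' ppart_sub_space[OF bet] by blast
    then obtain B where B: "B \<in> Q" "x \<in> B" using ppartD(3)[OF Q] by blast
    show "x \<in> E \<union> E'"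
    proof (rule ccontr)
      assume nx: "x \<notin> E \<union> E'"
      then have "x \<in> g' B" using E'[OF B(1)] B(2) by blast
      then have "g' B = A'" using ppartD(4)[OF bet g'[OF B(1)] A'] x by blast
      then show False using False B(1) by blast
    qed
  qed
  then show ?thesis using A by blast
qed


primrec Jseq :: "'a measure \<Rightarrow> ('a set set \<Rightarrow> 'a set set) \<Rightarrow> nat \<Rightarrow> 'a set set" where
  "Jseq M ch 0 = {space M}"
| "Jseq M ch (Suc n) = meet (Jseq M ch n) (ch (Jseq M ch n))"

context prob_space
begin

lemma KL:
  assumes K: "K \<subseteq> partitions_le M r" and e: "0 < \<epsilon>"
    and np: "\<forall>F. finite F \<and> F \<subseteq> K \<longrightarrow> (\<exists>\<alpha>\<in>K. \<forall>\<beta>\<in>F. \<epsilon> \<le> rokhlin_dist M \<alpha> \<beta>)"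
  shows "\<exists>c>0. \<forall>Q. ppart M Q \<longrightarrow> (\<exists>\<alpha>\<in>K. c \<le> cond_entropy M \<alpha> Q)"
proof -
  define D where "D = 8 * (real r + 1) / \<epsilon> + 1"
  have D1: "1 \<le> D" using e by (simp add: D_def)
  define L where "L = ln D"
  have L0: "0 \<le> L" using D1 by (simp add: L_def)
  have eL: "real r * exp (- L - 1) \<le> \<epsilon> / 8"
  proof -
    have "exp (- L - 1) \<le> exp (- L)" by simp
    also have "exp (- L) = 1 / D" using D1 by (simp add: L_def exp_minus inverse_eq_divide)
    finally have "real r * exp (- L - 1) \<le> real r * (1 / D)" by (intro mult_left_mono) auto
    also have "\<dots> \<le> \<epsilon> / 8"
    proof -
      have "\<epsilon> * D = 8 * (real r + 1) + \<epsilon>" using e by (simp add: D_def field_simps)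
      then have "8 * real r \<le> \<epsilon> * D" using e by simp
      then show ?thesis using D1 e by (simp add: field_simps)
    qed
    finally show ?thesis .
  qed
  define c where "c = \<epsilon> / (16 * (1 + L))"
  have c0: "0 < c" using e L0 by (simp add: c_def)
  have c2: "(1 + L) * (2 * c) = \<epsilon> / 8" using L0 by (simp add: c_def field_simps)
  show ?thesis
  proof (rule ccontr)
    assume "\<not> ?thesis"
    then obtain Q where Q: "ppart M Q" and small: "\<And>\<alpha>. \<alpha> \<in> K \<Longrightarrow> cond_entropy M \<alpha> Q < c"
      using c0 by (auto simp: not_le)
    note q = ppartD[OF Q]
    have pK: "\<And>\<alpha>. \<alpha> \<in> K \<Longrightarrow> ppart M \<alpha>" using K partitions_le_ppart by blast
    have cK: "\<And>\<alpha>. \<alpha> \<in> K \<Longrightarrow> card \<alpha> \<le> r" using K unfolding partitions_le_def by blast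
    define gs where "gs \<alpha> B = (SOME g. g \<in> \<alpha> \<and> (\<forall>A\<in>\<alpha>. measure M (A \<inter> B) \<le> measure M (g \<inter> B)))" for \<alpha> B
    have gs: "gs \<alpha> B \<in> \<alpha> \<and> (\<forall>A\<in>\<alpha>. measure M (A \<inter> B) \<le> measure M (gs \<alpha> B \<inter> B))"
      if aK: "\<alpha> \<in> K" and bQ: "B \<in> Q" for \<alpha> B
    proof -
      have Bs: "B \<in> sets M" using q(2) bQ by blast
      obtain g where "g \<in> \<alpha>" "\<forall>A\<in>\<alpha>. measure M (A \<inter> B) \<le> measure M (g \<inter> B)"
        using argmax_atom[OF pK[OF aK] Bs] by metis
      then show ?thesis unfolding gs_def by (rule someI[where P = "\<lambda>g. g \<in> \<alpha> \<and> (\<forall>A\<in>\<alpha>. measure M (A \<inter> B) \<le> measure M (g \<inter> B))", OF conjI])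
    qed
    define Es where "Es \<alpha> = (\<Union>B\<in>Q. B - gs \<alpha> B)" for \<alpha>
    have Es_sets: "Es \<alpha> \<in> sets M" if "\<alpha> \<in> K" for \<alpha>
    proof -
      have "\<And>B. B \<in> Q \<Longrightarrow> B - gs \<alpha> B \<in> sets M"
        using q(2) gs[OF that] ppartD(2)[OF pK[OF that]] by blast
      then show ?thesis unfolding Es_def using q(1) by blast
    qed
    have Es_small: "measure M (Es \<alpha>) < c" if "\<alpha> \<in> K" for \<alpha>
    proof -
      have "measure M (Es \<alpha>) \<le> (\<Sum>B\<in>Q. measure M (B - gs \<alpha> B))"
        unfolding Es_def
        using q(1) q(2) gs[OF that] ppartD(2)[OF pK[OF that]]
        by (intro finite_measure_subadditive_finite) blast+
      also have "\<dots> \<le> cond_entropy M \<alpha> Q"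
        unfolding cond_entropy_def
      proof (intro sum_mono)
        fix B assume B: "B \<in> Q"
        show "measure M (B - gs \<alpha> B) \<le> measure M B * (\<Sum>A\<in>\<alpha>. eta (measure M (A \<inter> B) / measure M B))"
          using miss_le[OF pK[OF that] _ conjunct1[OF gs[OF that B]]] conjunct2[OF gs[OF that B]] q(2) B
          by blast
      qed
      also have "\<dots> < c" using small[OF that] .
      finally show ?thesis .
    qed
    define pat where "pat \<alpha> = {(B, B'). B \<in> Q \<and> B' \<in> Q \<and> gs \<alpha> B = gs \<alpha> B'}" for \<alpha>
    define rep where "rep p = (SOME \<alpha>. \<alpha> \<in> K \<and> pat \<alpha> = p)" for p
    define F where "F = rep ` pat ` K"
    have finF: "finite F"
    proof -
      have "pat ` K \<subseteq> Pow (Q \<times> Q)" unfolding pat_def by auto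
      then have "finite (pat ` K)" using q(1) by (meson finite_Pow_iff finite_SigmaI finite_subset)
      then show ?thesis unfolding F_def by simp
    qed
    have rep: "rep (pat \<alpha>) \<in> K \<and> pat (rep (pat \<alpha>)) = pat \<alpha>" if "\<alpha> \<in> K" for \<alpha>
      unfolding rep_def using that by (rule someI[where P = "\<lambda>\<beta>. \<beta> \<in> K \<and> pat \<beta> = pat \<alpha>", OF conjI]) simp
    have FK: "F \<subseteq> K" unfolding F_def using rep by blast
    obtain \<alpha> where \<alpha>: "\<alpha> \<in> K" and far: "\<And>\<beta>. \<beta> \<in> F \<Longrightarrow> \<epsilon> \<le> rokhlin_dist M \<alpha> \<beta>"
    proof -
      have "\<exists>\<alpha>\<in>K. \<forall>\<beta>\<in>F. \<epsilon> \<le> rokhlin_dist M \<alpha> \<beta>" using np finF FK by simp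
      then show ?thesis using that by blast
    qed
    define \<beta> where "\<beta> = rep (pat \<alpha>)"
    have \<beta>: "\<beta> \<in> K" "pat \<beta> = pat \<alpha>" using rep[OF \<alpha>] unfolding \<beta>_def by auto
    have \<beta>F: "\<beta> \<in> F" unfolding \<beta>_def F_def using \<alpha> by blast
    have bound: "cond_entropy M a b \<le> \<epsilon> / 4"
      if ab: "a \<in> K" "b \<in> K" "pat a = pat b" for a b
    proof -
      have ne: "a \<noteq> {}" using ppartD(3)[OF pK[OF ab(1)]] space_ne by auto
      have patg: "gs a B = gs a B' \<longleftrightarrow> gs b B = gs b B'" if "B \<in> Q" "B' \<in> Q" for B B'
      proof -
        have "(B, B') \<in> pat a \<longleftrightarrow> (B, B') \<in> pat b" using ab(3) by simp
        then show ?thesis using that unfolding pat_def by simp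
      qed
      have cov: "\<exists>A\<in>a. A' - A \<subseteq> Es a \<union> Es b" if "A' \<in> b" for A'
        by (rule same_pattern[OF Q pK[OF ab(2)] ne, of "gs a" "gs b"])
           (use gs ab(1,2) patg that in \<open>auto simp: Es_def\<close>)
      have "cond_entropy M a b \<le> (1 + L) * measure M (Es a \<union> Es b) + card a * exp (- L - 1)"
        by (rule cond_upper[OF pK[OF ab(1)] pK[OF ab(2)] _ cov L0]) (use Es_sets ab in auto)
      also have "\<dots> \<le> (1 + L) * (2 * c) + real r * exp (- L - 1)"
      proof (intro add_mono mult_left_mono mult_right_mono)
        have "measure M (Es a \<union> Es b) \<le> measure M (Es a) + measure M (Es b)"
          using Es_sets[OF ab(1)] Es_sets[OF ab(2)] by (rule measure_Un_le)
        then show "measure M (Es a \<union> Es b) \<le> 2 * c" using Es_small[OF ab(1)] Es_small[OF ab(2)] by linarith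
        show "real (card a) \<le> real r" using cK[OF ab(1)] by simp
      qed (use L0 in auto)
      also have "\<dots> \<le> \<epsilon> / 4" using c2 eL by simp
      finally show ?thesis .
    qed
    have "rokhlin_dist M \<alpha> \<beta> \<le> \<epsilon> / 2"
      unfolding rokhlin_dist_def using bound[OF \<alpha> \<beta>(1) \<beta>(2)[symmetric]] bound[OF \<beta>(1) \<alpha> \<beta>(2)] by simp
    then show False using far[OF \<beta>F] e by simp
  qed
qed

lemma converse_part:
  assumes K: "K \<subseteq> partitions_le M r" and c0: "0 < c"
    and big: "\<forall>Q. ppart M Q \<longrightarrow> (\<exists>\<alpha>\<in>K. c \<le> cond_entropy M \<alpha> Q)"
  shows "max_pattern_entropy M K \<noteq> 0"
proof -
  have pK: "\<And>\<alpha>. \<alpha> \<in> K \<Longrightarrow> ppart M \<alpha>" using K partitions_le_ppart by blast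
  define ch where "ch Q = (SOME \<alpha>. \<alpha> \<in> K \<and> c \<le> cond_entropy M \<alpha> Q)" for Q
  have chQ: "ch Q \<in> K \<and> c \<le> cond_entropy M (ch Q) Q" if "ppart M Q" for Q
    unfolding ch_def using big that by (metis (mono_tags, lifting) someI_ex)
  define as where "as n = ch (Jseq M ch n)" for n
  have J: "ppart M (Jseq M ch n) \<and> Jseq M ch n = join_n M as n" for n
  proof (induction n)
    case 0 then show ?case by (simp add: join_n_0 ppart_space)
  next
    case (Suc n)
    have pJ: "ppart M (Jseq M ch n)" and eq: "Jseq M ch n = join_n M as n" using Suc by auto
    have chK: "ch (Jseq M ch n) \<in> K" using chQ[OF pJ] by simp
    have a: "as n = ch (Jseq M ch n)" by (simp add: as_def)
    have p: "ppart M (Jseq M ch (Suc n))" using ppart_meet[OF pJ pK[OF chK]] by simp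
    have "Jseq M ch (Suc n) = join_n M as (Suc n)"
      using join_n_Suc[of M as n] eq a by simp
    then show ?case using p by simp
  qed
  have asK: "as n \<in> K" for n unfolding as_def using chQ J by blast
  have H: "real n * c \<le> part_entropy M (join_n M as n)" for n
  proof (induction n)
    case 0 then show ?case by (simp add: join_n_0 part_entropy_def eta_def prob_space)
  next
    case (Suc n)
    have pJ: "ppart M (join_n M as n)" using J by metis
    have "part_entropy M (join_n M as (Suc n)) = part_entropy M (meet (as n) (join_n M as n))"
      by (simp add: join_n_Suc meet_comm)
    also have "\<dots> = part_entropy M (join_n M as n) + cond_entropy M (as n) (join_n M as n)"
      by (rule chain_rule[OF pK[OF asK] pJ])
    finally have "part_entropy M (join_n M as (Suc n)) = part_entropy M (join_n M as n) + cond_entropy M (as n) (join_n M as n)" .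
    moreover have "c \<le> cond_entropy M (as n) (join_n M as n)"
      using chQ[OF pJ] J[of n] unfolding as_def by simp
    ultimately show ?case using Suc by (simp add: algebra_simps)
  qed
  have ps: "ennreal (real n * c) \<le> pattern_sup M K n" for n
    unfolding pattern_sup_def
    by (rule SUP_upper2[where i = as]) (use asK H in \<open>auto intro: ennreal_leI\<close>)
  have ev: "\<forall>\<^sub>F n in sequentially. ennreal c \<le> pattern_sup M K n / of_nat n"
    using eventually_ge_at_top[of 1]
  proof eventually_elim
    case (elim n)
    have "ennreal c = ennreal (real n * c) / ennreal (real n)"
      using elim c0 by (subst divide_ennreal) auto
    also have "\<dots> \<le> pattern_sup M K n / ennreal (real n)"
      by (rule divide_right_mono_ennreal[OF ps])
    finally show ?case by (simp add: ennreal_of_nat_eq_real_of_nat)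
  qed
  have "ennreal c \<le> max_pattern_entropy M K"
    unfolding max_pattern_entropy_def by (rule le_Limsup[OF trivial_limit_sequentially ev])
  then show ?thesis using c0 by auto
qed

lemma forward_part:
  assumes K: "K \<subseteq> partitions_le M r" and pc: "rokhlin_precompact M K"
  shows "max_pattern_entropy M K = 0"
proof -
  have pK: "\<And>\<alpha>. \<alpha> \<in> K \<Longrightarrow> ppart M \<alpha>" using K partitions_le_ppart by blast
  have cK: "\<And>\<alpha>. \<alpha> \<in> K \<Longrightarrow> card \<alpha> \<le> r" using K unfolding partitions_le_def by blast
  have bound: "max_pattern_entropy M K \<le> ennreal (2 * e)" if e: "0 < e" for e
  proof -
    obtain F where F: "finite F" "F \<subseteq> K" "\<And>\<alpha>. \<alpha> \<in> K \<Longrightarrow> \<exists>\<beta>\<in>F. rokhlin_dist M \<alpha> \<beta> < e"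
    proof -
      have "\<exists>F. finite F \<and> F \<subseteq> K \<and> (\<forall>\<alpha>\<in>K. \<exists>\<beta>\<in>F. rokhlin_dist M \<alpha> \<beta> < e)"
        using pc e unfolding rokhlin_precompact_def by simp
      then show ?thesis using that by blast
    qed
    obtain fs where fs: "set fs = F" using finite_list[OF F(1)] by blast
    define Z where "Z = join_n M (\<lambda>i. fs ! i) (length fs)"
    have fsK: "\<And>i. i < length fs \<Longrightarrow> fs ! i \<in> K" using fs F(2) nth_mem by blast
    have Z: "ppart M Z" unfolding Z_def using fsK pK by (intro ppart_join) auto
    have cZ: "card Z \<le> r ^ length fs" unfolding Z_def using fsK pK cK by (intro card_join) auto
    define C where "C = real (r ^ length fs)"
    have HZ: "part_entropy M Z \<le> C" using pe_le_card[of Z] cZ unfolding C_def by (meson of_nat_le_iff order_trans)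
    have refF: "refines Z \<beta>" if bF: "\<beta> \<in> F" for \<beta>
    proof -
      obtain i where i: "i < length fs" "fs ! i = \<beta>" using bF fs by (metis in_set_conv_nth)
      then show ?thesis unfolding Z_def using join_refines[of i "length fs" M "\<lambda>i. fs ! i"] by simp
    qed
    have Hn: "part_entropy M (join_n M as n) \<le> C + real n * e" if as: "\<forall>i<n. as i \<in> K" for n as
    proof -
      define bs where "bs i = (SOME \<beta>. \<beta> \<in> F \<and> rokhlin_dist M (as i) \<beta> < e)" for i
      have bs: "bs i \<in> F \<and> rokhlin_dist M (as i) (bs i) < e" if "i < n" for i
        unfolding bs_def using F(3) as that by (metis (mono_tags, lifting) someI_ex)
      have ce: "cond_entropy M (as i) (bs i) \<le> e" if "i < n" for i
      proof -
        have "0 \<le> cond_entropy M (bs i) (as i)" using as that pK by (intro cond_entropy_nonneg) auto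
        then show ?thesis using bs[OF that] unfolding rokhlin_dist_def by linarith
      qed
      have "part_entropy M (join_n M as n) \<le> part_entropy M Z + (\<Sum>i<n. cond_entropy M (as i) (bs i))"
      proof (rule fwd_bound[OF Z])
        fix i assume i: "i < n"
        have "as i \<in> K" using as i by simp
        moreover have "bs i \<in> F" using bs[OF i] by simp
        moreover then have "bs i \<in> K" using F(2) by blast
        ultimately show "ppart M (as i) \<and> ppart M (bs i) \<and> refines Z (bs i)" using pK refF by simp
      qed
      also have "\<dots> \<le> C + (\<Sum>i<n. e)" using HZ ce by (intro add_mono sum_mono) auto
      finally show ?thesis by simp
    qed
    have ps: "pattern_sup M K n \<le> ennreal (C + real n * e)" for n
      unfolding pattern_sup_def by (rule SUP_least) (use Hn in \<open>auto intro: ennreal_leI\<close>)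
    have C0: "0 \<le> C" unfolding C_def by simp
    obtain N :: nat where N: "C / e \<le> real N" using real_arch_simple by blast
    have ev: "\<forall>\<^sub>F n in sequentially. pattern_sup M K n / of_nat n \<le> ennreal (2 * e)"
      using eventually_ge_at_top[of "N + 1"]
    proof eventually_elim
      case (elim n)
      then have np: "0 < real n" by simp
      have Cn: "C / real n \<le> e"
      proof -
        have "C \<le> e * real N" using N e by (simp add: field_simps)
        also have "\<dots> \<le> e * real n" using elim e by (intro mult_left_mono) auto
        finally show ?thesis using np by (simp add: field_simps)
      qed
      have "pattern_sup M K n / of_nat n \<le> ennreal (C + real n * e) / ennreal (real n)"
        unfolding ennreal_of_nat_eq_real_of_nat by (rule divide_right_mono_ennreal[OF ps])
      also have "\<dots> = ennreal ((C + real n * e) / real n)"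
        using C0 e np by (intro divide_ennreal) auto
      also have "\<dots> \<le> ennreal (2 * e)"
      proof (rule ennreal_leI)
        have "(C + real n * e) / real n = C / real n + e" using np by (simp add: field_simps)
        then show "(C + real n * e) / real n \<le> 2 * e" using Cn by simp
      qed
      finally show ?case .
    qed
    show ?thesis unfolding max_pattern_entropy_def by (rule Limsup_bounded[OF ev])
  qed
  have "max_pattern_entropy M K \<le> 0"
  proof (rule ennreal_le_epsilon)
    fix e :: real assume "0 < e"
    then have "max_pattern_entropy M K \<le> ennreal (2 * (e / 2))" by (intro bound) simp
    then show "max_pattern_entropy M K \<le> 0 + ennreal e" by simp
  qed
  then show ?thesis by simp
qed

end

theorem proposition3p1:
  fixes M :: "'a::polish_space measure" and r :: nat and K :: "'a set set set"
  assumes "prob_space M" and "sets M = sets borel" and "r \<ge> 2"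
    and "K \<subseteq> partitions_le M r"
  shows "rokhlin_precompact M K \<longleftrightarrow> max_pattern_entropy M K = 0"
proof
  interpret prob_space M by (rule assms(1))
  show "rokhlin_precompact M K \<Longrightarrow> max_pattern_entropy M K = 0"
    using forward_part[OF assms(4)] by blast
  show "rokhlin_precompact M K" if h: "max_pattern_entropy M K = 0"
  proof (rule ccontr)
    assume "\<not> rokhlin_precompact M K"
    then obtain \<epsilon> where e: "0 < \<epsilon>"
      and np: "\<forall>F. finite F \<and> F \<subseteq> K \<longrightarrow> (\<exists>\<alpha>\<in>K. \<forall>\<beta>\<in>F. \<epsilon> \<le> rokhlin_dist M \<alpha> \<beta>)"
      unfolding rokhlin_precompact_def by (auto simp: not_less)
    obtain c where "0 < c" "\<forall>Q. ppart M Q \<longrightarrow> (\<exists>\<alpha>\<in>K. c \<le> cond_entropy M \<alpha> Q)"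
      using KL[OF assms(4) e np] by blast
    then show False using converse_part[OF assms(4)] h by blast
  qed
qed

end
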